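(* Let $P,Q$ be finite rooted posets that are Boolean sums of stack-depth at most $1$. If $(P,c,x)$ and $(Q,c',y)$ are $n$-generated models on them (rooted at their roots) which are $2$-bisimilar, then they are isomorphic.
   Context: The depth of a point $x$ in a finite poset is the largest $m$ with a chain $x=x_1<\dots<x_m$. A finite rooted poset is a Boolean sum if (1) whenever $y$ is an immediate successor of $x$ then $d(x)=d(y)+1$, and (2) each point of depth $k+1$ lies below all points of depth $k$. For a Boolean sum, let $c_i$ be the number of points of depth $i$; a $k$-stack is a run of $k$ consecutive depths each containing more than one point; the stack-depth is the largest $k$ for which a $k$-stack exists (0 if none). A model over $n$ is a finite rooted poset with an order-preserving colouring $c$ into subsets of $\{p_1,\dots,p_n\}$; it is $n$-generated if no two distinct points generate bisimilar rooted submodels. $k$-bisimulation: relations $S_k\subseteq\dots\subseteq S_0$ with the roots related by $S_k$, $S_0$ colour-preserving, and for $j<k$ forth and back conditions along $\le$ from $S_{j+1}$ to $S_j$. *)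

theory Defs
  imports Main
begin

text \<open>A finite poset is given by a carrier set and an order relation (only its
restriction to the carrier matters). Rooted: the root is the least element.\<close>

definition finite_rooted_poset :: "'a set \<Rightarrow> ('a \<Rightarrow> 'a \<Rightarrow> bool) \<Rightarrow> 'a \<Rightarrow> bool" where
  "finite_rooted_poset P le r \<longleftrightarrow>
     finite P \<and> r \<in> P \<and>
     (\<forall>x\<in>P. le x x) \<and>
     (\<forall>x\<in>P. \<forall>y\<in>P. le x y \<and> le y x \<longrightarrow> x = y) \<and>
     (\<forall>x\<in>P. \<forall>y\<in>P. \<forall>z\<in>P. le x y \<and> le y z \<longrightarrow> le x z) \<and>
     (\<forall>x\<in>P. le r x)"

definition strict_chain_from :: "'a set \<Rightarrow> ('a \<Rightarrow> 'a \<Rightarrow> bool) \<Rightarrow> 'a \<Rightarrow> 'a list \<Rightarrow> bool" where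
  "strict_chain_from P le x xs \<longleftrightarrow>
     xs \<noteq> [] \<and> hd xs = x \<and> set xs \<subseteq> P \<and> sorted_wrt (\<lambda>a b. le a b \<and> a \<noteq> b) xs"

definition depth :: "'a set \<Rightarrow> ('a \<Rightarrow> 'a \<Rightarrow> bool) \<Rightarrow> 'a \<Rightarrow> nat" where
  "depth P le x = Max {length xs | xs. strict_chain_from P le x xs}"

definition immediate_successor :: "'a set \<Rightarrow> ('a \<Rightarrow> 'a \<Rightarrow> bool) \<Rightarrow> 'a \<Rightarrow> 'a \<Rightarrow> bool" where
  "immediate_successor P le x y \<longleftrightarrow>
     x \<in> P \<and> y \<in> P \<and> le x y \<and> x \<noteq> y \<and>
     \<not> (\<exists>z\<in>P. le x z \<and> le z y \<and> z \<noteq> x \<and> z \<noteq> y)"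

definition boolean_sum :: "'a set \<Rightarrow> ('a \<Rightarrow> 'a \<Rightarrow> bool) \<Rightarrow> 'a \<Rightarrow> bool" where
  "boolean_sum P le r \<longleftrightarrow>
     finite_rooted_poset P le r \<and>
     (\<forall>x\<in>P. \<forall>y\<in>P. immediate_successor P le x y \<longrightarrow> depth P le x = depth P le y + 1) \<and>
     (\<forall>k. \<forall>x\<in>P. \<forall>y\<in>P. depth P le x = k + 1 \<and> depth P le y = k \<longrightarrow> le x y)"

definition level_count :: "'a set \<Rightarrow> ('a \<Rightarrow> 'a \<Rightarrow> bool) \<Rightarrow> nat \<Rightarrow> nat" where
  "level_count P le i = card {x\<in>P. depth P le x = i}"

definition has_stack :: "'a set \<Rightarrow> ('a \<Rightarrow> 'a \<Rightarrow> bool) \<Rightarrow> nat \<Rightarrow> bool" where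
  "has_stack P le k \<longleftrightarrow> (\<exists>i. \<forall>j. i \<le> j \<and> j < i + k \<longrightarrow> level_count P le j > 1)"

definition stack_depth :: "'a set \<Rightarrow> ('a \<Rightarrow> 'a \<Rightarrow> bool) \<Rightarrow> nat" where
  "stack_depth P le = Max {k. has_stack P le k}"

text \<open>Models over n: propositional variables p_1..p_n are numbers 1..n;
colouring is order preserving (monotone upward).\<close>
definition model :: "nat \<Rightarrow> 'a set \<Rightarrow> ('a \<Rightarrow> 'a \<Rightarrow> bool) \<Rightarrow> 'a \<Rightarrow> ('a \<Rightarrow> nat set) \<Rightarrow> bool" where
  "model n P le r c \<longleftrightarrow> finite_rooted_poset P le r \<and>
     (\<forall>x\<in>P. c x \<subseteq> {1..n}) \<and>
     (\<forall>x\<in>P. \<forall>y\<in>P. le x y \<longrightarrow> c x \<subseteq> c y)"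

definition bisimulation ::
  "'a set \<Rightarrow> ('a \<Rightarrow> 'a \<Rightarrow> bool) \<Rightarrow> ('a \<Rightarrow> nat set) \<Rightarrow>
   'b set \<Rightarrow> ('b \<Rightarrow> 'b \<Rightarrow> bool) \<Rightarrow> ('b \<Rightarrow> nat set) \<Rightarrow> ('a \<times> 'b) set \<Rightarrow> bool" where
  "bisimulation P le c Q le' c' B \<longleftrightarrow>
     B \<subseteq> P \<times> Q \<and>
     (\<forall>(a,b)\<in>B. c a = c' b) \<and>
     (\<forall>(a,b)\<in>B. \<forall>a'\<in>P. le a a' \<longrightarrow> (\<exists>b'\<in>Q. le' b b' \<and> (a',b') \<in> B)) \<and>
     (\<forall>(a,b)\<in>B. \<forall>b'\<in>Q. le' b b' \<longrightarrow> (\<exists>a'\<in>P. le a a' \<and> (a',b') \<in> B))"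

text \<open>The rooted submodels generated by x and y (the up-sets) are bisimilar
(with x related to y).\<close>
definition generated_bisimilar :: "'a set \<Rightarrow> ('a \<Rightarrow> 'a \<Rightarrow> bool) \<Rightarrow> ('a \<Rightarrow> nat set) \<Rightarrow> 'a \<Rightarrow> 'a \<Rightarrow> bool" where
  "generated_bisimilar P le c x y \<longleftrightarrow>
     (\<exists>B. bisimulation {z\<in>P. le x z} le c {z\<in>P. le y z} le c B \<and> (x, y) \<in> B)"

definition n_generated :: "nat \<Rightarrow> 'a set \<Rightarrow> ('a \<Rightarrow> 'a \<Rightarrow> bool) \<Rightarrow> 'a \<Rightarrow> ('a \<Rightarrow> nat set) \<Rightarrow> bool" where
  "n_generated n P le r c \<longleftrightarrow> model n P le r c \<and>
     (\<forall>x\<in>P. \<forall>y\<in>P. x \<noteq> y \<longrightarrow> \<not> generated_bisimilar P le c x y)"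

definition k_bisimulation :: "nat \<Rightarrow>
   'a set \<Rightarrow> ('a \<Rightarrow> 'a \<Rightarrow> bool) \<Rightarrow> ('a \<Rightarrow> nat set) \<Rightarrow> 'a \<Rightarrow>
   'b set \<Rightarrow> ('b \<Rightarrow> 'b \<Rightarrow> bool) \<Rightarrow> ('b \<Rightarrow> nat set) \<Rightarrow> 'b \<Rightarrow> (nat \<Rightarrow> ('a \<times> 'b) set) \<Rightarrow> bool" where
  "k_bisimulation k P le c x Q le' c' y S \<longleftrightarrow>
     (\<forall>j\<le>k. S j \<subseteq> P \<times> Q) \<and>
     (\<forall>j<k. S (Suc j) \<subseteq> S j) \<and>
     (x, y) \<in> S k \<and>
     (\<forall>(a,b)\<in>S 0. c a = c' b) \<and>
     (\<forall>j<k. \<forall>(a,b)\<in>S (Suc j). \<forall>a'\<in>P. le a a' \<longrightarrow> (\<exists>b'\<in>Q. le' b b' \<and> (a',b') \<in> S j)) \<and>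
     (\<forall>j<k. \<forall>(a,b)\<in>S (Suc j). \<forall>b'\<in>Q. le' b b' \<longrightarrow> (\<exists>a'\<in>P. le a a' \<and> (a',b') \<in> S j))"

definition k_bisimilar :: "nat \<Rightarrow>
   'a set \<Rightarrow> ('a \<Rightarrow> 'a \<Rightarrow> bool) \<Rightarrow> ('a \<Rightarrow> nat set) \<Rightarrow> 'a \<Rightarrow>
   'b set \<Rightarrow> ('b \<Rightarrow> 'b \<Rightarrow> bool) \<Rightarrow> ('b \<Rightarrow> nat set) \<Rightarrow> 'b \<Rightarrow> bool" where
  "k_bisimilar k P le c x Q le' c' y \<longleftrightarrow> (\<exists>S. k_bisimulation k P le c x Q le' c' y S)"

definition models_isomorphic ::
  "'a set \<Rightarrow> ('a \<Rightarrow> 'a \<Rightarrow> bool) \<Rightarrow> ('a \<Rightarrow> nat set) \<Rightarrow>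
   'b set \<Rightarrow> ('b \<Rightarrow> 'b \<Rightarrow> bool) \<Rightarrow> ('b \<Rightarrow> nat set) \<Rightarrow> bool" where
  "models_isomorphic P le c Q le' c' \<longleftrightarrow>
     (\<exists>f. bij_betw f P Q \<and>
          (\<forall>a\<in>P. \<forall>b\<in>P. le a b \<longleftrightarrow> le' (f a) (f b)) \<and>
          (\<forall>a\<in>P. c' (f a) = c a))"

end

theory Submission
  imports Defs
begin

lemma sorted_wrt_strict_distinct:
  "sorted_wrt (\<lambda>a b. le a b \<and> a \<noteq> b) xs \<Longrightarrow> distinct xs"
  by (induction xs) auto

definition ucol :: "'a set \<Rightarrow> ('a \<Rightarrow> 'a \<Rightarrow> bool) \<Rightarrow> ('a \<Rightarrow> nat set) \<Rightarrow> 'a \<Rightarrow> nat set set" where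
  "ucol P le c a = c ` {z\<in>P. le a z}"

locale BS =
  fixes P :: "'a set" and le :: "'a \<Rightarrow> 'a \<Rightarrow> bool" and r :: 'a and c :: "'a \<Rightarrow> nat set" and n :: nat
  assumes bs: "boolean_sum P le r" and sd: "stack_depth P le \<le> 1" and ng: "n_generated n P le r c"
begin

lemma frp: "finite_rooted_poset P le r" using bs unfolding boolean_sum_def by blast
lemma fin: "finite P" using frp unfolding finite_rooted_poset_def by blast
lemma rP: "r \<in> P" using frp unfolding finite_rooted_poset_def by blast
lemma refl: "x \<in> P \<Longrightarrow> le x x" using frp unfolding finite_rooted_poset_def by blast
lemma antisym: "x\<in>P \<Longrightarrow> y\<in>P \<Longrightarrow> le x y \<Longrightarrow> le y x \<Longrightarrow> x = y"
  using frp unfolding finite_rooted_poset_def by blast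
lemma trans: "x\<in>P \<Longrightarrow> y\<in>P \<Longrightarrow> z\<in>P \<Longrightarrow> le x y \<Longrightarrow> le y z \<Longrightarrow> le x z"
  using frp unfolding finite_rooted_poset_def by blast
lemma root: "x\<in>P \<Longrightarrow> le r x" using frp unfolding finite_rooted_poset_def by blast
lemma levels: "x\<in>P \<Longrightarrow> y\<in>P \<Longrightarrow> depth P le x = Suc (depth P le y) \<Longrightarrow> le x y"
  using bs unfolding boolean_sum_def by auto
lemma mono: "x\<in>P \<Longrightarrow> y\<in>P \<Longrightarrow> le x y \<Longrightarrow> c x \<subseteq> c y"
  using ng unfolding n_generated_def model_def by blast
lemma nobis: "x\<in>P \<Longrightarrow> y\<in>P \<Longrightarrow> x\<noteq>y \<Longrightarrow> \<not> generated_bisimilar P le c x y"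
  using ng unfolding n_generated_def by blast

abbreviation "dp \<equiv> depth P le"

lemma chain_len: "strict_chain_from P le x xs \<Longrightarrow> length xs \<le> card P"
proof -
  assume h: "strict_chain_from P le x xs"
  then have "distinct xs" "set xs \<subseteq> P" unfolding strict_chain_from_def
    using sorted_wrt_strict_distinct by auto
  then show ?thesis using fin by (metis card_mono distinct_card)
qed

lemma dset_fin: "finite {length xs | xs. strict_chain_from P le x xs}"
  by (rule finite_subset[of _ "{..card P}"]) (use chain_len in auto)

lemma single_chain: "x \<in> P \<Longrightarrow> strict_chain_from P le x [x]"
  unfolding strict_chain_from_def by auto

lemma depth_ex: assumes "x\<in>P" shows "\<exists>xs. strict_chain_from P le x xs \<and> length xs = dp x"
proof -
  have ne: "{length xs | xs. strict_chain_from P le x xs} \<noteq> {}" using single_chain[OF assms] by blast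
  have "dp x \<in> {length xs | xs. strict_chain_from P le x xs}" unfolding depth_def
    using Max_in[OF dset_fin ne] .
  then show ?thesis by auto
qed

lemma depth_ge: "strict_chain_from P le x xs \<Longrightarrow> length xs \<le> dp x"
  unfolding depth_def by (rule Max_ge[OF dset_fin]) auto

lemma depth_pos: "x\<in>P \<Longrightarrow> 1 \<le> dp x" using depth_ge[OF single_chain] by fastforce
lemma depth_card: "x\<in>P \<Longrightarrow> dp x \<le> card P" using depth_ex chain_len by metis

lemma depth_strict: assumes "x\<in>P" "z\<in>P" "le x z" "x\<noteq>z" shows "dp z < dp x"
proof -
  obtain ys where ys: "strict_chain_from P le z ys" "length ys = dp z" using depth_ex[OF assms(2)] by blast
  then obtain zs where zs: "ys = z # zs" unfolding strict_chain_from_def by (cases ys) auto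
  have sP: "set ys \<subseteq> P" and sw: "sorted_wrt (\<lambda>a b. le a b \<and> a \<noteq> b) ys"
    using ys(1) unfolding strict_chain_from_def by auto
  have "\<forall>y\<in>set ys. le x y \<and> x \<noteq> y"
  proof
    fix y assume y: "y \<in> set ys"
    have lzy: "le z y" using y sw zs assms(2) refl by auto
    have yP: "y\<in>P" using y sP by auto
    have "le x y" using trans[OF assms(1,2) yP assms(3) lzy] .
    moreover have "x \<noteq> y" using lzy antisym assms by blast
    ultimately show "le x y \<and> x \<noteq> y" by blast
  qed
  then have "strict_chain_from P le x (x # ys)" using sP sw assms(1) unfolding strict_chain_from_def by auto
  from depth_ge[OF this] ys(2) show ?thesis by simp
qed

lemma depth_nth: assumes "strict_chain_from P le x xs" "length xs = dp x" "i < length xs"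
  shows "dp (xs!i) = dp x - i"
proof -
  have sP: "set xs \<subseteq> P" and sw: "sorted_wrt (\<lambda>a b. le a b \<and> a \<noteq> b) xs" and hd: "hd xs = x"
    and ne: "xs \<noteq> []" using assms(1) unfolding strict_chain_from_def by auto
  have "strict_chain_from P le (xs!i) (drop i xs)"
    unfolding strict_chain_from_def using assms(3) sP sw
    by (auto simp: hd_drop_conv_nth dest: in_set_dropD)
  then have lo: "dp x - i \<le> dp (xs!i)" using depth_ge assms(2) by fastforce
  have "dp (xs!j) + j \<le> dp x" if "j < length xs" for j
    using that
  proof (induction j)
    case 0 then show ?case using hd ne by (simp add: hd_conv_nth)
  next
    case (Suc j)
    have "le (xs!j) (xs!Suc j) \<and> xs!j \<noteq> xs!Suc j"
      using sorted_wrt_nth_less[OF sw, of j "Suc j"] Suc.prems by simp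
    moreover have "xs!j \<in> P" "xs!Suc j \<in> P" using sP Suc.prems nth_mem
      by (metis Suc_lessD subsetD)+
    ultimately have "dp (xs!Suc j) < dp (xs!j)" using depth_strict by blast
    then show ?case using Suc by simp
  qed
  then show ?thesis using lo assms(3) by fastforce
qed

lemma depth_reach: assumes "x\<in>P" "1 \<le> j" "j \<le> dp x" shows "\<exists>z\<in>P. le x z \<and> dp z = j"
proof -
  obtain xs where xs: "strict_chain_from P le x xs" "length xs = dp x" using depth_ex[OF assms(1)] by blast
  let ?i = "dp x - j"
  have i: "?i < length xs" using xs(2) assms by simp
  have "dp (xs!?i) = j" using depth_nth[OF xs i] assms by simp
  moreover have "xs!?i \<in> P" using xs(1) i unfolding strict_chain_from_def by (meson nth_mem subsetD)
  moreover have "le x (xs!?i)"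
  proof (cases "?i = 0")
    case True
    have "xs!0 = x" using xs unfolding strict_chain_from_def by (metis hd_conv_nth)
    then show ?thesis using True refl assms(1) by simp
  next
    case False then have "le (xs!0) (xs!?i)" using sorted_wrt_nth_less[of _ xs 0 ?i] xs i
      unfolding strict_chain_from_def by auto
    moreover have "xs!0 = x" using xs unfolding strict_chain_from_def by (metis hd_conv_nth)
    ultimately show ?thesis by simp
  qed
  ultimately show ?thesis by blast
qed

lemma depth_le: assumes "x\<in>P" "y\<in>P" "dp y < dp x" shows "le x y"
proof -
  obtain z where z: "z\<in>P" "le x z" "dp z = Suc (dp y)"
    using depth_reach[OF assms(1), of "Suc (dp y)"] assms(3) by auto
  then have "le z y" using levels assms(2) by blast
  then show ?thesis using trans assms z by blast
qed

lemma no2stack: assumes "a1\<in>P" "a2\<in>P" "b1\<in>P" "b2\<in>P" "a1\<noteq>a2" "b1\<noteq>b2"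
  "dp a1 = j" "dp a2 = j" "dp b1 = Suc j" "dp b2 = Suc j" shows False
proof -
  have lc: "1 < level_count P le k" if "u\<in>P" "v\<in>P" "u\<noteq>v" "dp u = k" "dp v = k" for u v k
  proof -
    have "{u,v} \<subseteq> {x\<in>P. dp x = k}" using that by auto
    moreover have "finite {x\<in>P. dp x = k}" using fin by auto
    ultimately have "card {u,v} \<le> card {x\<in>P. dp x = k}" by (simp add: card_mono)
    then show ?thesis using that(3) unfolding level_count_def by simp
  qed
  have "has_stack P le 2" unfolding has_stack_def
  proof (rule exI[of _ j], intro allI impI)
    fix jj assume "j \<le> jj \<and> jj < j + 2"
    then have "jj = j \<or> jj = Suc j" by auto
    then show "1 < level_count P le jj" using lc assms by blast
  qed
  moreover have "finite {k. has_stack P le k}"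
  proof (rule finite_subset[of _ "{..Suc (card P)}"])
    show "{k. has_stack P le k} \<subseteq> {..Suc (card P)}"
    proof
      fix k assume "k \<in> {k. has_stack P le k}"
      then obtain i where i: "\<forall>jj. i \<le> jj \<and> jj < i + k \<longrightarrow> level_count P le jj > 1"
        unfolding has_stack_def by blast
      show "k \<in> {..Suc (card P)}"
      proof (rule ccontr)
        assume "k \<notin> {..Suc (card P)}" then have k: "Suc (card P) < k" by simp
        have "level_count P le (i + k - 1) > 1" using i k by simp
        then have "{x\<in>P. dp x = i+k-1} \<noteq> {}" unfolding level_count_def by (metis card.empty not_less_zero)
        then obtain z where "z\<in>P" "dp z = i+k-1" by blast
        then show False using depth_card k by fastforce
      qed
    qed
  qed simp
  ultimately have "2 \<le> stack_depth P le" unfolding stack_depth_def by (simp add: Max_ge)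
  then show False using sd by simp
qed

lemma bis_G: assumes "a\<in>P" "b\<in>P" "a\<noteq>b" "c a = c b"
  "\<forall>z\<in>P. le a z \<and> z \<noteq> a \<longrightarrow> le b z" "\<forall>z\<in>P. le b z \<and> z \<noteq> b \<longrightarrow> le a z" shows False
proof -
  define B where "B = {(a,b)} \<union> {(z,z) | z. z\<in>P \<and> le a z \<and> le b z}"
  have "bisimulation {z\<in>P. le a z} le c {z\<in>P. le b z} le c B"
    unfolding bisimulation_def
  proof (intro conjI)
    show "B \<subseteq> {z \<in> P. le a z} \<times> {z \<in> P. le b z}" unfolding B_def using assms refl by auto
    show "\<forall>(p, q)\<in>B. c p = c q" unfolding B_def using assms by auto
    show "\<forall>(p, q)\<in>B. \<forall>a'\<in>{z \<in> P. le a z}. le p a' \<longrightarrow> (\<exists>b'\<in>{z \<in> P. le b z}. le q b' \<and> (a', b') \<in> B)"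
    proof (intro ballI impI, clarify)
      fix p q a' assume pq: "(p,q) \<in> B" and a': "a'\<in>P" "le a a'" "le p a'"
      show "\<exists>b'\<in>{z \<in> P. le b z}. le q b' \<and> (a', b') \<in> B"
      proof (cases "p = a \<and> q = b")
        case True
        show ?thesis
        proof (cases "a' = a")
          case True then show ?thesis using \<open>p = a \<and> q = b\<close> assms refl unfolding B_def by auto
        next
          case False then have "le b a'" using assms a' by blast
          then show ?thesis using \<open>p = a \<and> q = b\<close> a' unfolding B_def by auto
        qed
      next
        case False then have "p = q" "p \<in> P" "le a p" "le b p" using pq unfolding B_def by auto
        then have "le b a'" using trans assms a' by blast
        then show ?thesis using \<open>p = q\<close> a' unfolding B_def by auto
      qed
    qed
    show "\<forall>(p, q)\<in>B. \<forall>b'\<in>{z \<in> P. le b z}. le q b' \<longrightarrow> (\<exists>a'\<in>{z \<in> P. le a z}. le p a' \<and> (a', b') \<in> B)"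
    proof (intro ballI impI, clarify)
      fix p q b' assume pq: "(p,q) \<in> B" and b': "b'\<in>P" "le b b'" "le q b'"
      show "\<exists>a'\<in>{z \<in> P. le a z}. le p a' \<and> (a', b') \<in> B"
      proof (cases "p = a \<and> q = b")
        case True
        show ?thesis
        proof (cases "b' = b")
          case True then show ?thesis using \<open>p = a \<and> q = b\<close> assms refl unfolding B_def by auto
        next
          case False then have "le a b'" using assms b' by blast
          then show ?thesis using \<open>p = a \<and> q = b\<close> b' unfolding B_def by auto
        qed
      next
        case False then have "p = q" "p \<in> P" "le a p" "le b p" using pq unfolding B_def by auto
        then have "le a b'" using trans assms b' by blast
        then show ?thesis using \<open>p = q\<close> b' unfolding B_def by auto
      qed
    qed
  qed
  then have "generated_bisimilar P le c a b" unfolding generated_bisimilar_def B_def by blast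
  then show False using nobis assms by blast
qed

lemma lemM: assumes "w\<in>P" "u\<in>P" "le w u" "w\<noteq>u" "c w = c u"
  "\<forall>z1\<in>P. \<forall>z2\<in>P. dp z1 = dp w - 1 \<longrightarrow> dp z2 = dp w - 1 \<longrightarrow> z1 = z2" shows False
proof -
  have du: "dp u < dp w" using depth_strict assms by blast
  have "1 \<le> dp u" using depth_pos assms(2) .
  then have "1 \<le> dp w - 1" "dp w - 1 \<le> dp w" using du by auto
  then obtain v where v: "v\<in>P" "le w v" "dp v = dp w - 1"
    using depth_reach[OF assms(1), of "dp w - 1"] by blast
  have lvu: "le v u"
  proof (cases "dp v = dp u")
    case True then have "v = u" using assms(6) v assms(2) by auto
    then show ?thesis using refl assms(2) by simp
  next
    case False then have "dp u < dp v" using v du by simp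
    then show ?thesis using depth_le v(1) assms(2) by blast
  qed
  have cv: "c v = c w" using mono[OF assms(1) v(1) v(2)] mono[OF v(1) assms(2) lvu] assms(5) by blast
  show False
  proof (rule bis_G[OF assms(1) v(1) _ cv[symmetric]])
    show "w \<noteq> v" using v(3) du by auto
    show "\<forall>z\<in>P. le w z \<and> z \<noteq> w \<longrightarrow> le v z"
    proof (intro ballI impI)
      fix z assume z: "z\<in>P" "le w z \<and> z \<noteq> w"
      then have "dp z < dp w" using depth_strict assms(1) by metis
      then have "dp z < dp v \<or> dp z = dp v" using v by auto
      then show "le v z" using depth_le[OF v(1) z(1)] assms(6) v z refl by auto
    qed
    show "\<forall>z\<in>P. le v z \<and> z \<noteq> v \<longrightarrow> le w z" using trans[OF assms(1) v(1)] v(2) by blast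
  qed
qed

lemma lemB1: assumes "a\<in>P" "b\<in>P" "a\<noteq>b" "dp a = dp b" "c a = c b" shows False
proof (rule bis_G[OF assms(1,2,3,5)])
  show "\<forall>z\<in>P. le a z \<and> z \<noteq> a \<longrightarrow> le b z"
    using depth_strict depth_le assms by (metis)
  show "\<forall>z\<in>P. le b z \<and> z \<noteq> b \<longrightarrow> le a z"
    using depth_strict depth_le assms by (metis)
qed

lemma key: assumes aP: "a\<in>P" and a'P: "a'\<in>P" and sub: "ucol P le c a' \<subseteq> ucol P le c a"
  shows "le a a'"
proof -
  have "c a' \<in> ucol P le c a'" unfolding ucol_def using a'P refl by auto
  then obtain u where u: "u\<in>P" "le a u" "c a' = c u" using sub unfolding ucol_def by auto
  have dua: "dp u \<le> dp a" using depth_strict[OF aP u(1) u(2)] by (cases "a = u") auto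
  consider "dp a' < dp a" | "dp a' = dp a" "a = a'" | "dp a' = dp a" "a \<noteq> a'" | "dp a < dp a'"
    using nat_neq_iff by blast
  then show ?thesis
  proof cases
    case 1 then show ?thesis using depth_le[OF aP a'P] by simp
  next
    case 2 then show ?thesis using refl aP by simp
  next
    case 3
    show ?thesis
    proof (cases "u = a")
      case True
      have "False" using lemB1[OF a'P aP] 3 u True by metis
      then show ?thesis ..
    next
      case False
      then have "dp u < dp a" using depth_strict[OF aP u(1) u(2)] by auto
      then have lu: "le a' u" using depth_le a'P u(1) 3 by simp
      have "a' \<noteq> u" using \<open>dp u < dp a\<close> 3 by auto
      show ?thesis
      proof (rule lemM[OF a'P u(1) lu \<open>a' \<noteq> u\<close> u(3), THEN FalseE], intro ballI impI)
        fix z1 z2 assume z: "z1\<in>P" "z2\<in>P" "dp z1 = dp a' - 1" "dp z2 = dp a' - 1"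
        have "1 \<le> dp z1" using depth_pos[OF z(1)] .
        show "z1 = z2"
        proof (rule ccontr)
          assume "z1 \<noteq> z2"
          moreover have "dp a = Suc (dp a' - 1)" "dp a' = Suc (dp a' - 1)" using z(3) 3(1) \<open>1 \<le> dp z1\<close> by auto
          ultimately show False using no2stack[OF z(1,2) aP a'P _ 3(2) z(3,4)] by blast
        qed
      qed
    qed
  next
    case 4
    let ?d = "dp a'"
    have a'a: "le a' a" using depth_le[OF a'P aP] 4 by simp
    have "a' \<noteq> a" using 4 by auto
    show ?thesis
    proof (cases "\<forall>z1\<in>P. \<forall>z2\<in>P. dp z1 = ?d - 1 \<longrightarrow> dp z2 = ?d - 1 \<longrightarrow> z1 = z2")
      case True
      have "le a' u" using trans[OF a'P aP u(1) a'a u(2)] .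
      moreover have "a' \<noteq> u" using dua 4 by auto
      ultimately show ?thesis using lemM[OF a'P u(1) _ _ u(3) True] by simp
    next
      case False
      then obtain z1 z2 where z: "z1\<in>P" "z2\<in>P" "dp z1 = ?d - 1" "dp z2 = ?d - 1" "z1 \<noteq> z2" by blast
      have "\<exists>w. w\<in>P \<and> dp w = ?d - 1 \<and> w \<noteq> a"
      proof (cases "z1 = a")
        case True then show ?thesis using z by (intro exI[of _ z2]) auto
      next
        case False then show ?thesis using z by (intro exI[of _ z1]) auto
      qed
      then obtain w where w: "w\<in>P" "dp w = ?d - 1" "w \<noteq> a" by blast
      have "1 \<le> dp w" using depth_pos[OF w(1)] .
      then have "dp w < ?d" using w by simp
      then have "le a' w" using depth_le[OF a'P w(1)] by simp
      then have "c w \<in> ucol P le c a'" unfolding ucol_def using w by auto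
      then obtain u' where u': "u'\<in>P" "le a u'" "c w = c u'" using sub unfolding ucol_def by auto
      have "u' \<noteq> w"
      proof
        assume "u' = w"
        then have "dp w < dp a" using depth_strict[OF aP u'(1) u'(2)] w(3) by simp
        then show False using w 4 by simp
      qed
      have du': "dp u' \<le> dp a" using depth_strict[OF aP u'(1) u'(2)] by (cases "a = u'") auto
      show ?thesis
      proof (cases "dp u' = ?d - 1")
        case True then show ?thesis using lemB1[OF w(1) u'(1) \<open>u' \<noteq> w\<close>[symmetric]] w u' by auto
      next
        case False
        then have "dp u' < dp w" using du' 4 w by simp
        then have "le w u'" using depth_le[OF w(1) u'(1)] by simp
        show ?thesis
        proof (rule lemM[OF w(1) u'(1) \<open>le w u'\<close> \<open>u' \<noteq> w\<close>[symmetric] u'(3), THEN FalseE], intro ballI impI)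
          fix y1 y2 assume y: "y1\<in>P" "y2\<in>P" "dp y1 = dp w - 1" "dp y2 = dp w - 1"
          have "1 \<le> dp y1" using depth_pos[OF y(1)] .
          show "y1 = y2"
          proof (rule ccontr)
            assume "y1 \<noteq> y2"
            moreover have "dp z1 = Suc (dp w - 1)" "dp z2 = Suc (dp w - 1)" using y(3) z(3,4) w(2) \<open>1 \<le> dp y1\<close> by auto
            ultimately show False using no2stack[OF y(1,2) z(1,2) _ z(5) y(3,4)] by blast
          qed
        qed
      qed
    qed
  qed
qed

lemma ucol_mono: "a\<in>P \<Longrightarrow> a'\<in>P \<Longrightarrow> le a a' \<Longrightarrow> ucol P le c a' \<subseteq> ucol P le c a"
  unfolding ucol_def using trans by blast

lemma ucol_iff: "a\<in>P \<Longrightarrow> a'\<in>P \<Longrightarrow> le a a' \<longleftrightarrow> ucol P le c a' \<subseteq> ucol P le c a"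
  using ucol_mono key by blast

lemma ucol_inj: "a\<in>P \<Longrightarrow> a'\<in>P \<Longrightarrow> ucol P le c a = ucol P le c a' \<Longrightarrow> a = a'"
proof -
  assume a: "a\<in>P" "a'\<in>P" "ucol P le c a = ucol P le c a'"
  then have "le a a'" "le a' a" using key by auto
  then show ?thesis using antisym a by simp
qed

lemma ucol_Inter: assumes "a\<in>P" shows "\<Inter>(ucol P le c a) = c a"
proof
  show "\<Inter>(ucol P le c a) \<subseteq> c a" unfolding ucol_def using assms refl by auto
  show "c a \<subseteq> \<Inter>(ucol P le c a)" unfolding ucol_def using assms mono by auto
qed

end

theorem mainTheorem6:
  fixes P :: "'a set" and le :: "'a \<Rightarrow> 'a \<Rightarrow> bool" and x :: 'a and c :: "'a \<Rightarrow> nat set"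
    and Q :: "'b set" and le' :: "'b \<Rightarrow> 'b \<Rightarrow> bool" and y :: 'b and c' :: "'b \<Rightarrow> nat set"
    and n :: nat
  assumes "boolean_sum P le x" and "stack_depth P le \<le> 1"
    and "boolean_sum Q le' y" and "stack_depth Q le' \<le> 1"
    and "n_generated n P le x c" and "n_generated n Q le' y c'"
    and "k_bisimilar 2 P le c x Q le' c' y"
  shows "models_isomorphic P le c Q le' c'"
proof -
  interpret p: BS P le x c n using assms(1,2,5) by (rule BS.intro)
  interpret q: BS Q le' y c' n using assms(3,4,6) by (rule BS.intro)
  obtain S where S: "k_bisimulation 2 P le c x Q le' c' y S"
    using assms(7) unfolding k_bisimilar_def by blast
  have S2: "(x,y) \<in> S 2" using S unfolding k_bisimulation_def by blast
  have c0: "\<forall>(a,b)\<in>S 0. c a = c' b" using S unfolding k_bisimulation_def by blast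
  have fo: "\<And>j. j < 2 \<Longrightarrow> \<forall>(a,b)\<in>S (Suc j). \<forall>a'\<in>P. le a a' \<longrightarrow> (\<exists>b'\<in>Q. le' b b' \<and> (a',b') \<in> S j)"
    using S unfolding k_bisimulation_def by blast
  have ba: "\<And>j. j < 2 \<Longrightarrow> \<forall>(a,b)\<in>S (Suc j). \<forall>b'\<in>Q. le' b b' \<longrightarrow> (\<exists>a'\<in>P. le a a' \<and> (a',b') \<in> S j)"
    using S unfolding k_bisimulation_def by blast
  have S1eq: "ucol P le c a = ucol Q le' c' b" if ab: "(a,b) \<in> S 1" for a b
  proof
    show "ucol P le c a \<subseteq> ucol Q le' c' b"
    proof
      fix C assume "C \<in> ucol P le c a"
      then obtain a' where a': "a'\<in>P" "le a a'" "C = c a'" unfolding ucol_def by auto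
      have "\<forall>a'\<in>P. le a a' \<longrightarrow> (\<exists>b'\<in>Q. le' b b' \<and> (a',b') \<in> S 0)" using fo[of 0] ab by auto
      then obtain b' where b': "b'\<in>Q" "le' b b'" "(a',b') \<in> S 0" using a' by blast
      then have "c a' = c' b'" using c0 by auto
      then show "C \<in> ucol Q le' c' b" using b' a' unfolding ucol_def by auto
    qed
    show "ucol Q le' c' b \<subseteq> ucol P le c a"
    proof
      fix C assume "C \<in> ucol Q le' c' b"
      then obtain b' where b': "b'\<in>Q" "le' b b'" "C = c' b'" unfolding ucol_def by auto
      have "\<forall>b'\<in>Q. le' b b' \<longrightarrow> (\<exists>a'\<in>P. le a a' \<and> (a',b') \<in> S 0)" using ba[of 0] ab by auto
      then obtain a' where a': "a'\<in>P" "le a a'" "(a',b') \<in> S 0" using b' by blast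
      then have "c a' = c' b'" using c0 by auto
      then show "C \<in> ucol P le c a" using b' a' unfolding ucol_def by auto
    qed
  qed
  have exQ: "\<exists>b\<in>Q. ucol Q le' c' b = ucol P le c a" if aP: "a\<in>P" for a
  proof -
    have "\<forall>a'\<in>P. le x a' \<longrightarrow> (\<exists>b'\<in>Q. le' y b' \<and> (a',b') \<in> S 1)" using fo[of 1] S2 by (auto simp: numeral_2_eq_2)
    then obtain b where "b\<in>Q" "(a,b) \<in> S 1" using aP p.root by blast
    then show ?thesis using S1eq by metis
  qed
  have exP: "\<exists>a\<in>P. ucol Q le' c' b = ucol P le c a" if bQ: "b\<in>Q" for b
  proof -
    have "\<forall>b'\<in>Q. le' y b' \<longrightarrow> (\<exists>a'\<in>P. le x a' \<and> (a',b') \<in> S 1)" using ba[of 1] S2 by (auto simp: numeral_2_eq_2)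
    then obtain a where "a\<in>P" "(a,b) \<in> S 1" using bQ q.root by blast
    then show ?thesis using S1eq by metis
  qed
  define f where "f a = (SOME b. b\<in>Q \<and> ucol Q le' c' b = ucol P le c a)" for a
  have f: "f a \<in> Q \<and> ucol Q le' c' (f a) = ucol P le c a" if "a\<in>P" for a
    unfolding f_def using someI_ex[OF exQ[OF that, unfolded Bex_def]] .
  have inj: "inj_on f P"
  proof (rule inj_onI)
    fix a a' assume "a\<in>P" "a'\<in>P" "f a = f a'"
    then have "ucol P le c a = ucol P le c a'" using f by metis
    then show "a = a'" using p.ucol_inj \<open>a\<in>P\<close> \<open>a'\<in>P\<close> by blast
  qed
  have img: "f ` P = Q"
  proof
    show "f ` P \<subseteq> Q" using f by auto
    show "Q \<subseteq> f ` P"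
    proof
      fix b assume b: "b\<in>Q"
      then obtain a where a: "a\<in>P" "ucol Q le' c' b = ucol P le c a" using exP by blast
      then have "f a = b" using f[OF a(1)] q.ucol_inj[OF _ b] by simp
      then show "b \<in> f ` P" using a by blast
    qed
  qed
  show ?thesis unfolding models_isomorphic_def
  proof (intro exI conjI)
    show "bij_betw f P Q" using inj img by (simp add: bij_betw_def)
    show "\<forall>a\<in>P. \<forall>b\<in>P. le a b = le' (f a) (f b)"
    proof (intro ballI)
      fix a b assume ab: "a\<in>P" "b\<in>P"
      show "le a b = le' (f a) (f b)"
        using p.ucol_iff[OF ab] q.ucol_iff[of "f a" "f b"] f[OF ab(1)] f[OF ab(2)] by simp
    qed
    show "\<forall>a\<in>P. c' (f a) = c a"
    proof
      fix a assume a: "a\<in>P"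
      show "c' (f a) = c a" using p.ucol_Inter[OF a] q.ucol_Inter[of "f a"] f[OF a] by simp
    qed
  qed
qed

end
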